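(* Under the standing assumptions for the $M=1$ system (see context) with $\nu_0=0$ and $\nu_1=\nu$, assume also $x_0(s)\ne0$ for $s>0$ and $s^{-\nu}y_1(s)/x_0(s)\to1$ as $s\to0^+$. Then $$s x_0'=-\eta_0x_0+s^{-\nu}y_0,\quad s y_0'=-(2\xi_0+s)s^{\nu}x_0+\eta_0y_0,\quad \eta_0'=s^{\nu}x_0^2,\quad \xi_0'=x_0y_0,$$ and moreover $$s^{\nu+1}x_0^2=2\xi_0+\eta_0-\eta_0(\eta_0-\nu),\qquad -s^{-\nu}y_0^2-(2\xi_0+s)s^{\nu}x_0^2+(2\eta_0-\nu)x_0y_0+\eta_0=0.$$
   Context: Fix complex parameters $\nu_0,\nu_1$ and put $e_1=\nu_0+\nu_1$, $e_2=\nu_0\nu_1$. Let $x_0,x_1,y_0,y_1,\xi_0,\xi_1,\eta_0,\eta_1$ be smooth complex-valued functions of $s\in(0,\infty)$ satisfying, with $'=d/ds$, the system $s x_0'=-\eta_0x_0-x_1$, $s x_1'=-\eta_1x_0+sx_0+\xi_0x_0+\xi_1x_1$, $s y_1'=-\xi_1y_1+y_0$, $s y_0'=-\xi_0y_1-sy_1+\eta_0y_0+\eta_1y_1$, $\xi_0'=x_0y_0$, $\xi_1'=x_0y_1$, $\eta_0'=x_0y_1$, $\eta_1'=x_1y_1$, together with the boundary behaviour as $s\to0^+$: $\xi_0\to e_2$, $\xi_1\to-e_1$, $\eta_0\to0$, $\eta_1\to0$, and $x_j(s)y_k(s)\to0$ for all $j,k\in\{0,1\}$. *)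

theory Defs
  imports "HOL-Analysis.Analysis"
begin

definition smooth_pos :: "(real \<Rightarrow> complex) \<Rightarrow> bool" where
  "smooth_pos f \<longleftrightarrow> (\<exists>D :: nat \<Rightarrow> real \<Rightarrow> complex. D 0 = f \<and>
      (\<forall>k. \<forall>s>0. (D k has_vector_derivative D (Suc k) s) (at s)))"

abbreviation dds :: "(real \<Rightarrow> complex) \<Rightarrow> real \<Rightarrow> complex" where
  "dds f s \<equiv> vector_derivative f (at s)"

definition M1_system ::
  "complex \<Rightarrow> complex \<Rightarrow> (real \<Rightarrow> complex) \<Rightarrow> (real \<Rightarrow> complex) \<Rightarrow> (real \<Rightarrow> complex) \<Rightarrow>
   (real \<Rightarrow> complex) \<Rightarrow> (real \<Rightarrow> complex) \<Rightarrow> (real \<Rightarrow> complex) \<Rightarrow> (real \<Rightarrow> complex) \<Rightarrow>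
   (real \<Rightarrow> complex) \<Rightarrow> bool" where
  "M1_system \<nu>0 \<nu>1 x0 x1 y0 y1 \<xi>0 \<xi>1 \<eta>0 \<eta>1 \<longleftrightarrow>
     smooth_pos x0 \<and> smooth_pos x1 \<and> smooth_pos y0 \<and> smooth_pos y1 \<and>
     smooth_pos \<xi>0 \<and> smooth_pos \<xi>1 \<and> smooth_pos \<eta>0 \<and> smooth_pos \<eta>1 \<and>
     (\<forall>s>0.
        of_real s * dds x0 s = - \<eta>0 s * x0 s - x1 s \<and>
        of_real s * dds x1 s = - \<eta>1 s * x0 s + of_real s * x0 s + \<xi>0 s * x0 s + \<xi>1 s * x1 s \<and>
        of_real s * dds y1 s = - \<xi>1 s * y1 s + y0 s \<and>
        of_real s * dds y0 s = - \<xi>0 s * y1 s - of_real s * y1 s + \<eta>0 s * y0 s + \<eta>1 s * y1 s \<and>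
        dds \<xi>0 s = x0 s * y0 s \<and>
        dds \<xi>1 s = x0 s * y1 s \<and>
        dds \<eta>0 s = x0 s * y1 s \<and>
        dds \<eta>1 s = x1 s * y1 s) \<and>
     (\<xi>0 \<longlongrightarrow> \<nu>0 * \<nu>1) (at_right 0) \<and>
     (\<xi>1 \<longlongrightarrow> - (\<nu>0 + \<nu>1)) (at_right 0) \<and>
     (\<eta>0 \<longlongrightarrow> 0) (at_right 0) \<and>
     (\<eta>1 \<longlongrightarrow> 0) (at_right 0) \<and>
     ((\<lambda>s. x0 s * y0 s) \<longlongrightarrow> 0) (at_right 0) \<and>
     ((\<lambda>s. x0 s * y1 s) \<longlongrightarrow> 0) (at_right 0) \<and>
     ((\<lambda>s. x1 s * y0 s) \<longlongrightarrow> 0) (at_right 0) \<and>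
     ((\<lambda>s. x1 s * y1 s) \<longlongrightarrow> 0) (at_right 0)"

end

theory Submission
  imports Defs
begin

lemma pw_deriv:
  assumes "(s::real) > 0"
  shows "((\<lambda>t. (of_real t::complex) powr a) has_vector_derivative (a * of_real s powr a / of_real s)) (at s)"
proof -
  have nn: "(of_real s::complex) \<notin> \<real>\<^sub>\<le>\<^sub>0" using assms by (auto simp: nonpos_Reals_def)
  have 1: "((\<lambda>t. (of_real t::complex) powr a) has_vector_derivative (a * of_real s powr (a - 1))) (at s)"
    by (rule has_vector_derivative_real_field[OF has_field_derivative_powr[OF nn]])
  have "(of_real s::complex) powr a = of_real s powr (a - 1) * of_real s powr 1"
    using powr_add[of "of_real s::complex" "a - 1" 1] by simp
  then have "of_real s powr (a - 1) = (of_real s::complex) powr a / of_real s" using assms by simp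
  with 1 show ?thesis by simp
qed

lemma pw_inv:
  assumes "(s::real) > 0"
  shows "(of_real s::complex) powr (- a) * of_real s powr a = 1"
  using powr_add[of "of_real s::complex" "- a" a] assms by simp

lemma pw_suc:
  assumes "(s::real) > 0"
  shows "(of_real s::complex) powr (a + 1) = of_real s * of_real s powr a"
  using powr_add[of "of_real s::complex" a 1] assms by simp

lemma ofr: "((of_real::real\<Rightarrow>complex) has_vector_derivative 1) (at s)"
  using has_vector_derivative_of_real[OF DERIV_ident, where ?F="at s"] by simp

lemma der:
  assumes "smooth_pos f" "s > 0"
  shows "(f has_vector_derivative dds f s) (at s)"
proof -
  obtain D where D: "D 0 = f" "\<forall>k. \<forall>s>0. (D k has_vector_derivative D (Suc k) s) (at s)"
    using assms(1) unfolding smooth_pos_def by blast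
  have "(f has_vector_derivative D 1 s) (at s)" using D assms(2) by (metis One_nat_def)
  moreover then have "dds f s = D 1 s" by (rule vector_derivative_at)
  ultimately show ?thesis by simp
qed

lemma const0:
  fixes F :: "real \<Rightarrow> complex"
  assumes "\<And>s. s > 0 \<Longrightarrow> (F has_vector_derivative 0) (at s)"
    and "(F \<longlongrightarrow> c) (at_right 0)"
    and "s > 0"
  shows "F s = c"
proof -
  obtain k where k: "\<And>x. x \<in> {0<..} \<Longrightarrow> F x = k"
    using has_vector_derivative_zero_constant[of "{0<..}" F] assms(1)
    by (auto intro: has_vector_derivative_at_within)
  have ev: "eventually (\<lambda>x. F x = k) (at_right (0::real))"
    unfolding eventually_at_right_field using k by (auto intro!: exI[of _ 1])
  have "(F \<longlongrightarrow> k) (at_right 0)"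
    by (rule tendsto_eventually[OF ev])
  then have "k = c" using assms(2) tendsto_unique trivial_limit_at_right_real by blast
  then show ?thesis using k assms(3) by simp
qed

theorem mainTheorem4:
  fixes \<nu> :: complex
    and x0 x1 y0 y1 \<xi>0 \<xi>1 \<eta>0 \<eta>1 :: "real \<Rightarrow> complex"
  assumes sys: "M1_system 0 \<nu> x0 x1 y0 y1 \<xi>0 \<xi>1 \<eta>0 \<eta>1"
    and nz: "\<forall>s>0. x0 s \<noteq> 0"
    and lim: "((\<lambda>s. of_real s powr (- \<nu>) * y1 s / x0 s) \<longlongrightarrow> 1) (at_right 0)"
  shows "\<forall>s>0.
      of_real s * dds x0 s = - \<eta>0 s * x0 s + of_real s powr (- \<nu>) * y0 s \<and>
      of_real s * dds y0 s = - (2 * \<xi>0 s + of_real s) * of_real s powr \<nu> * x0 s + \<eta>0 s * y0 s \<and>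
      dds \<eta>0 s = of_real s powr \<nu> * (x0 s)\<^sup>2 \<and>
      dds \<xi>0 s = x0 s * y0 s \<and>
      of_real s powr (\<nu> + 1) * (x0 s)\<^sup>2 = 2 * \<xi>0 s + \<eta>0 s - \<eta>0 s * (\<eta>0 s - \<nu>) \<and>
      - (of_real s powr (- \<nu>)) * (y0 s)\<^sup>2 - (2 * \<xi>0 s + of_real s) * of_real s powr \<nu> * (x0 s)\<^sup>2
        + (2 * \<eta>0 s - \<nu>) * x0 s * y0 s + \<eta>0 s = 0"
proof -
  note S = sys[unfolded M1_system_def]
  have sm: "smooth_pos x0" "smooth_pos x1" "smooth_pos y0" "smooth_pos y1"
    "smooth_pos \<xi>0" "smooth_pos \<xi>1" "smooth_pos \<eta>0" "smooth_pos \<eta>1" using S by auto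
  have E: "of_real s * dds x0 s = - \<eta>0 s * x0 s - x1 s"
    "of_real s * dds x1 s = - \<eta>1 s * x0 s + of_real s * x0 s + \<xi>0 s * x0 s + \<xi>1 s * x1 s"
    "of_real s * dds y1 s = - \<xi>1 s * y1 s + y0 s"
    "of_real s * dds y0 s = - \<xi>0 s * y1 s - of_real s * y1 s + \<eta>0 s * y0 s + \<eta>1 s * y1 s"
    "dds \<xi>0 s = x0 s * y0 s"
    "dds \<xi>1 s = x0 s * y1 s"
    "dds \<eta>0 s = x0 s * y1 s"
    "dds \<eta>1 s = x1 s * y1 s" if "s > 0" for s using S that by auto
  have L: "(\<xi>0 \<longlongrightarrow> 0) (at_right 0)" "(\<xi>1 \<longlongrightarrow> - \<nu>) (at_right 0)"
    "(\<eta>0 \<longlongrightarrow> 0) (at_right 0)" "(\<eta>1 \<longlongrightarrow> 0) (at_right 0)"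
    "((\<lambda>s. x0 s * y0 s) \<longlongrightarrow> 0) (at_right 0)"
    "((\<lambda>s. x0 s * y1 s) \<longlongrightarrow> 0) (at_right 0)"
    "((\<lambda>s. x1 s * y0 s) \<longlongrightarrow> 0) (at_right 0)"
    "((\<lambda>s. x1 s * y1 s) \<longlongrightarrow> 0) (at_right 0)" using S by auto
  have d: "(x0 has_vector_derivative dds x0 s) (at s)" "(x1 has_vector_derivative dds x1 s) (at s)"
    "(y0 has_vector_derivative dds y0 s) (at s)" "(y1 has_vector_derivative dds y1 s) (at s)"
    "(\<xi>0 has_vector_derivative dds \<xi>0 s) (at s)" "(\<xi>1 has_vector_derivative dds \<xi>1 s) (at s)"
    "(\<eta>0 has_vector_derivative dds \<eta>0 s) (at s)" "(\<eta>1 has_vector_derivative dds \<eta>1 s) (at s)"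
    if "s > 0" for s using der[OF _ that] sm by auto

  have K0: "x0 s * y0 s + x1 s * y1 s = 0" if "s > 0" for s
  proof (rule const0[where F="\<lambda>t. x0 t * y0 t + x1 t * y1 t"])
    fix s :: real assume s: "s > 0"
    have h: "((\<lambda>t. x0 t * y0 t + x1 t * y1 t) has_vector_derivative
       (x0 s * dds y0 s + dds x0 s * y0 s + (x1 s * dds y1 s + dds x1 s * y1 s))) (at s)"
      by (intro derivative_intros d[OF s])
    have "of_real s * (x0 s * dds y0 s + dds x0 s * y0 s + (x1 s * dds y1 s + dds x1 s * y1 s))
      = x0 s * (of_real s * dds y0 s) + (of_real s * dds x0 s) * y0 s
        + x1 s * (of_real s * dds y1 s) + (of_real s * dds x1 s) * y1 s"
      by (simp add: algebra_simps)
    also have "\<dots> = 0" unfolding E[OF s] by (simp add: algebra_simps)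
    finally have "x0 s * dds y0 s + dds x0 s * y0 s + (x1 s * dds y1 s + dds x1 s * y1 s) = 0"
      using s by simp
    with h show "((\<lambda>t. x0 t * y0 t + x1 t * y1 t) has_vector_derivative 0) (at s)" by simp
  next
    show "((\<lambda>t. x0 t * y0 t + x1 t * y1 t) \<longlongrightarrow> 0) (at_right 0)"
      using tendsto_add[OF L(5) L(8)] by simp
  qed fact

  have Q: "\<xi>1 s - \<eta>0 s = - \<nu>" if "s > 0" for s
  proof (rule const0[where F="\<lambda>t. \<xi>1 t - \<eta>0 t"])
    fix s :: real assume s: "s > 0"
    show "((\<lambda>t. \<xi>1 t - \<eta>0 t) has_vector_derivative 0) (at s)"
      using has_vector_derivative_diff[OF d(6)[OF s] d(7)[OF s]] E[OF s] by simp
  next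
    show "((\<lambda>t. \<xi>1 t - \<eta>0 t) \<longlongrightarrow> - \<nu>) (at_right 0)"
      using tendsto_diff[OF L(2) L(3)] by simp
  qed fact

  have R: "\<xi>0 s + \<eta>1 s = 0" if "s > 0" for s
  proof (rule const0[where F="\<lambda>t. \<xi>0 t + \<eta>1 t"])
    fix s :: real assume s: "s > 0"
    show "((\<lambda>t. \<xi>0 t + \<eta>1 t) has_vector_derivative 0) (at s)"
      using has_vector_derivative_add[OF d(5)[OF s] d(8)[OF s]] E[OF s] K0[OF s] by simp
  next
    show "((\<lambda>t. \<xi>0 t + \<eta>1 t) \<longlongrightarrow> 0) (at_right 0)"
      using tendsto_add[OF L(1) L(4)] by simp
  qed fact

  have Lam: "of_real s powr (- \<nu>) * y1 s / x0 s = 1" if "s > 0" for s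
  proof (rule const0[where F="\<lambda>t. of_real t powr (- \<nu>) * y1 t / x0 t"])
    fix s :: real assume s: "s > 0"
    define Pm where "Pm = of_real s powr (- \<nu>)"
    have xs: "x0 s \<noteq> 0" using nz s by auto
    have inv: "((\<lambda>t. inverse (x0 t)) has_vector_derivative (dds x0 s * (- (inverse (x0 s) ^ Suc (Suc 0))))) (at s)"
      using field_vector_diff_chain_at[OF d(1)[OF s] DERIV_inverse[OF xs]] by (simp add: o_def)
    have h: "((\<lambda>t. of_real t powr (- \<nu>) * y1 t * inverse (x0 t)) has_vector_derivative
        (Pm * y1 s * (dds x0 s * (- (inverse (x0 s) ^ Suc (Suc 0))))
         + (Pm * dds y1 s + (- \<nu>) * Pm / of_real s * y1 s) * inverse (x0 s))) (at s)"
      unfolding Pm_def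
      by (intro has_vector_derivative_mult pw_deriv s d(4)[OF s] inv)
    define D where "D = Pm * y1 s * (dds x0 s * (- (inverse (x0 s) ^ Suc (Suc 0))))
         + (Pm * dds y1 s + (- \<nu>) * Pm / of_real s * y1 s) * inverse (x0 s)"
    have "of_real s * (x0 s)^2 * D = Pm * (- y1 s * (of_real s * dds x0 s)
        + x0 s * (of_real s * dds y1 s) - \<nu> * y1 s * x0 s)"
      unfolding D_def using xs s by (simp add: field_simps power2_eq_square)
    also have "\<dots> = Pm * (x0 s * y0 s + x1 s * y1 s + x0 s * y1 s * (\<eta>0 s - \<xi>1 s - \<nu>))"
      unfolding E[OF s] by (simp add: algebra_simps)
    also have "\<dots> = 0"
    proof -
      have "\<eta>0 s - \<xi>1 s - \<nu> = 0" using Q[OF s] by (simp add: algebra_simps)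
      then show ?thesis using K0[OF s] by simp
    qed
    finally have D0: "D = 0" using xs s by simp
    have h': "((\<lambda>t. of_real t powr (- \<nu>) * y1 t / x0 t) has_vector_derivative D) (at s)"
    proof -
      have fe: "(\<lambda>t. of_real t powr (- \<nu>) * y1 t / x0 t) = (\<lambda>t. of_real t powr (- \<nu>) * y1 t * inverse (x0 t))"
        by (simp add: divide_inverse fun_eq_iff)
      show ?thesis unfolding fe D_def by (rule h)
    qed
    show "((\<lambda>t. of_real t powr (- \<nu>) * y1 t / x0 t) has_vector_derivative 0) (at s)"
      using h' unfolding D0 .
  qed (use lim that in auto)

  have Y1: "y1 s = of_real s powr \<nu> * x0 s" if "s > 0" for s
  proof -
    have xs: "x0 s \<noteq> 0" using nz that by auto
    have "of_real s powr (- \<nu>) * y1 s = x0 s" using Lam[OF that] xs by (simp add: field_simps)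
    then have e: "of_real s powr (- \<nu>) * y1 s = x0 s" .
    have "y1 s = (of_real s powr (- \<nu>) * of_real s powr \<nu>) * y1 s" using pw_inv[OF that, of \<nu>] by simp
    also have "\<dots> = of_real s powr \<nu> * (of_real s powr (- \<nu>) * y1 s)" by (simp add: algebra_simps)
    finally show ?thesis unfolding e .
  qed
  have Y0: "y0 s = - (of_real s powr \<nu>) * x1 s" if "s > 0" for s
  proof -
    have xs: "x0 s \<noteq> 0" using nz that by auto
    have "x0 s * y0 s = x0 s * (- (of_real s powr \<nu>) * x1 s)"
      using K0[OF that] Y1[OF that] by (simp add: algebra_simps add_eq_0_iff)
    then show ?thesis using xs mult_left_cancel by blast
  qed
  have X1: "x1 s = - (of_real s powr (- \<nu>)) * y0 s" if "s > 0" for s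
    using Y0[OF that] pw_inv[OF that, of \<nu>] by (simp add: algebra_simps)

  have F0: "of_real s * x0 s * y1 s - 2 * \<xi>0 s - \<eta>0 s + \<eta>0 s * \<eta>0 s - \<nu> * \<eta>0 s = 0"
    if "s > 0" for s
  proof (rule const0[where F="\<lambda>t. of_real t * x0 t * y1 t - 2 * \<xi>0 t - \<eta>0 t + \<eta>0 t * \<eta>0 t - \<nu> * \<eta>0 t"])
    fix s :: real assume s: "s > 0"
    have h: "((\<lambda>t. of_real t * x0 t * y1 t - 2 * \<xi>0 t - \<eta>0 t + \<eta>0 t * \<eta>0 t - \<nu> * \<eta>0 t)
      has_vector_derivative
       (of_real s * x0 s * dds y1 s + (of_real s * dds x0 s + 1 * x0 s) * y1 s - 2 * dds \<xi>0 s - dds \<eta>0 s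
        + (\<eta>0 s * dds \<eta>0 s + dds \<eta>0 s * \<eta>0 s) - \<nu> * dds \<eta>0 s)) (at s)"
      by (intro derivative_intros d[OF s] ofr)
    have "of_real s * x0 s * dds y1 s + (of_real s * dds x0 s + 1 * x0 s) * y1 s - 2 * dds \<xi>0 s - dds \<eta>0 s
        + (\<eta>0 s * dds \<eta>0 s + dds \<eta>0 s * \<eta>0 s) - \<nu> * dds \<eta>0 s
      = x0 s * (of_real s * dds y1 s) + (of_real s * dds x0 s) * y1 s + x0 s * y1 s - 2 * dds \<xi>0 s - dds \<eta>0 s
        + 2 * \<eta>0 s * dds \<eta>0 s - \<nu> * dds \<eta>0 s"
      by (simp add: algebra_simps)
    also have "\<dots> = - (x0 s * y0 s + x1 s * y1 s) + x0 s * y1 s * (\<eta>0 s - \<xi>1 s - \<nu>)"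
      unfolding E[OF s] by (simp add: algebra_simps)
    also have "\<dots> = 0"
    proof -
      have "\<eta>0 s - \<xi>1 s - \<nu> = 0" using Q[OF s] by (simp add: algebra_simps)
      then show ?thesis using K0[OF s] by simp
    qed
    finally show "((\<lambda>t. of_real t * x0 t * y1 t - 2 * \<xi>0 t - \<eta>0 t + \<eta>0 t * \<eta>0 t - \<nu> * \<eta>0 t)
      has_vector_derivative 0) (at s)" using h by simp
  next
    have "((\<lambda>t. of_real t * (x0 t * y1 t)) \<longlongrightarrow> of_real 0 * 0) (at_right 0)"
      by (intro tendsto_mult L tendsto_of_real tendsto_ident_at)
    then have "((\<lambda>t. of_real t * x0 t * y1 t) \<longlongrightarrow> 0) (at_right 0)" by (simp add: mult.assoc)
    then have "((\<lambda>t. of_real t * x0 t * y1 t - 2 * \<xi>0 t - \<eta>0 t + \<eta>0 t * \<eta>0 t - \<nu> * \<eta>0 t)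
      \<longlongrightarrow> 0 - 2 * 0 - 0 + 0 * 0 - \<nu> * 0) (at_right 0)"
      by (intro tendsto_intros L)
    then show "((\<lambda>t. of_real t * x0 t * y1 t - 2 * \<xi>0 t - \<eta>0 t + \<eta>0 t * \<eta>0 t - \<nu> * \<eta>0 t)
      \<longlongrightarrow> 0) (at_right 0)" by simp
  qed fact

  have G0: "x1 s * y0 s - (2 * \<xi>0 s + of_real s) * (x0 s * y1 s) + (2 * \<eta>0 s - \<nu>) * (x0 s * y0 s) + \<eta>0 s = 0"
    if "s > 0" for s
  proof (rule const0[where F="\<lambda>t. x1 t * y0 t - (2 * \<xi>0 t + of_real t) * (x0 t * y1 t) + (2 * \<eta>0 t - \<nu>) * (x0 t * y0 t) + \<eta>0 t"])
    fix s :: real assume s: "s > 0"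
    have h: "((\<lambda>t. x1 t * y0 t - (2 * \<xi>0 t + of_real t) * (x0 t * y1 t) + (2 * \<eta>0 t - \<nu>) * (x0 t * y0 t) + \<eta>0 t)
      has_vector_derivative
       (x1 s * dds y0 s + dds x1 s * y0 s
        - ((2 * \<xi>0 s + of_real s) * (x0 s * dds y1 s + dds x0 s * y1 s) + (2 * dds \<xi>0 s + 1) * (x0 s * y1 s))
        + ((2 * \<eta>0 s - \<nu>) * (x0 s * dds y0 s + dds x0 s * y0 s) + (2 * dds \<eta>0 s - 0) * (x0 s * y0 s))
        + dds \<eta>0 s)) (at s)"
      by (intro derivative_intros d[OF s] ofr)
    define D where "D = x1 s * dds y0 s + dds x1 s * y0 s
        - ((2 * \<xi>0 s + of_real s) * (x0 s * dds y1 s + dds x0 s * y1 s) + (2 * dds \<xi>0 s + 1) * (x0 s * y1 s))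
        + ((2 * \<eta>0 s - \<nu>) * (x0 s * dds y0 s + dds x0 s * y0 s) + (2 * dds \<eta>0 s - 0) * (x0 s * y0 s))
        + dds \<eta>0 s"
    have "of_real s * D = x1 s * (of_real s * dds y0 s) + (of_real s * dds x1 s) * y0 s
        - ((2 * \<xi>0 s + of_real s) * (x0 s * (of_real s * dds y1 s) + (of_real s * dds x0 s) * y1 s)
            + of_real s * (2 * dds \<xi>0 s + 1) * (x0 s * y1 s))
        + ((2 * \<eta>0 s - \<nu>) * (x0 s * (of_real s * dds y0 s) + (of_real s * dds x0 s) * y0 s)
            + of_real s * (2 * dds \<eta>0 s) * (x0 s * y0 s))
        + of_real s * dds \<eta>0 s"
      unfolding D_def by (simp add: algebra_simps)
    also have "\<dots> = 0"
    proof -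
      have a: "\<eta>1 s = - \<xi>0 s" using R[OF s] by (simp add: add_eq_0_iff)
      have b: "\<xi>1 s = \<eta>0 s - \<nu>" using Q[OF s] by (simp add: algebra_simps)
      show ?thesis unfolding E[OF s] a b by (simp add: algebra_simps)
    qed
    finally have "D = 0" using s by simp
    with h show "((\<lambda>t. x1 t * y0 t - (2 * \<xi>0 t + of_real t) * (x0 t * y1 t) + (2 * \<eta>0 t - \<nu>) * (x0 t * y0 t) + \<eta>0 t)
      has_vector_derivative 0) (at s)" unfolding D_def by simp
  next
    have "((\<lambda>t. x1 t * y0 t - (2 * \<xi>0 t + of_real t) * (x0 t * y1 t) + (2 * \<eta>0 t - \<nu>) * (x0 t * y0 t) + \<eta>0 t)
      \<longlongrightarrow> 0 - (2 * 0 + of_real 0) * 0 + (2 * 0 - \<nu>) * 0 + 0) (at_right 0)"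
      by (intro tendsto_intros L tendsto_ident_at)
    then show "((\<lambda>t. x1 t * y0 t - (2 * \<xi>0 t + of_real t) * (x0 t * y1 t) + (2 * \<eta>0 t - \<nu>) * (x0 t * y0 t) + \<eta>0 t)
      \<longlongrightarrow> 0) (at_right 0)" by simp
  qed fact

  show ?thesis
  proof (intro allI impI conjI)
    fix s :: real assume s: "s > 0"
    let ?P = "of_real s powr \<nu> :: complex" and ?M = "of_real s powr (- \<nu>) :: complex"
    have a: "\<eta>1 s = - \<xi>0 s" using R[OF s] by (simp add: add_eq_0_iff)
    have pm: "?M * ?P = 1" by (rule pw_inv[OF s])
    show "of_real s * dds x0 s = - \<eta>0 s * x0 s + ?M * y0 s"
      using E(1)[OF s] X1[OF s] by simp
    show "of_real s * dds y0 s = - (2 * \<xi>0 s + of_real s) * ?P * x0 s + \<eta>0 s * y0 s"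
      using E(4)[OF s] Y1[OF s] a by (simp add: algebra_simps)
    show "dds \<eta>0 s = ?P * (x0 s)\<^sup>2"
      using E(7)[OF s] Y1[OF s] by (simp add: algebra_simps power2_eq_square)
    show "dds \<xi>0 s = x0 s * y0 s" using E(5)[OF s] .
    show "of_real s powr (\<nu> + 1) * (x0 s)\<^sup>2 = 2 * \<xi>0 s + \<eta>0 s - \<eta>0 s * (\<eta>0 s - \<nu>)"
      using F0[OF s] Y1[OF s] pw_suc[OF s, of \<nu>]
      by (simp add: algebra_simps power2_eq_square add_eq_0_iff eq_diff_eq)
    have e1: "?M * (y0 s)\<^sup>2 = - x1 s * y0 s"
      using X1[OF s] by (simp add: power2_eq_square algebra_simps)
    have e2: "(2 * \<xi>0 s + of_real s) * ?P * (x0 s)\<^sup>2 = (2 * \<xi>0 s + of_real s) * (x0 s * y1 s)"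
      using Y1[OF s] by (simp add: power2_eq_square algebra_simps)
    show "- ?M * (y0 s)\<^sup>2 - (2 * \<xi>0 s + of_real s) * ?P * (x0 s)\<^sup>2
        + (2 * \<eta>0 s - \<nu>) * x0 s * y0 s + \<eta>0 s = 0"
      using G0[OF s] e1 e2 by (simp add: algebra_simps)
  qed
qed

end
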